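(* In the Dirac setting, with $\Sigma_\Psi=\tanh(\beta H/2)$, $\mathscr{A},\mathscr{B}\subset\mathscr{C}$ open and disjoint with $\mathscr{B}'=\mathscr{C}\setminus\overline{\mathscr{B}}$ such that $P_{\mathscr{B}}+P_{\mathscr{B}'}=I$, one has the operator inequality $$P_{\mathscr{A}}\big(P_{\mathscr{B}'}-\Sigma_{\Psi,\mathscr{B}'}^2\big)P_{\mathscr{A}}\le \big(P_{\mathscr{A}}+|P_{\mathscr{B}}\Sigma_\Psi P_{\mathscr{A}}|\big)^2 .$$
   Context: $\mathfrak{K}$ is the Hilbert space of Dirac Cauchy data on $\mathscr{C}$, $H$ the self-adjoint one-particle Dirac Hamiltonian, $\beta>0$. $P_{\mathscr{V}}$ is the orthogonal projection onto data supported in $\mathscr{V}$ (multiplication by the indicator function), $\Sigma_{\Psi,\mathscr{B}'}:=P_{\mathscr{B}'}\Sigma_\Psi P_{\mathscr{B}'}$, and $|T|:=(T^*T)^{1/2}$. *)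

theory Defs
  imports "HOL-Analysis.Analysis"
begin

text \<open>Operators on a Hilbert space K, modelled as functions K \<Rightarrow> K on a type of class
  real_inner + complete_space (a complex Hilbert space viewed as a real Hilbert space with
  the inner product Re of the complex one).\<close>

definition op_adj :: "('a::real_inner \<Rightarrow> 'a) \<Rightarrow> ('a \<Rightarrow> 'a)" where
  "op_adj T = (THE S. \<forall>x y. inner (T x) y = inner x (S y))"

definition self_adjoint_op :: "('a::real_inner \<Rightarrow> 'a) \<Rightarrow> bool" where
  "self_adjoint_op T \<longleftrightarrow> bounded_linear T \<and> (\<forall>x y. inner (T x) y = inner x (T y))"

definition positive_op :: "('a::real_inner \<Rightarrow> 'a) \<Rightarrow> bool" where
  "positive_op T \<longleftrightarrow> self_adjoint_op T \<and> (\<forall>x. 0 \<le> inner x (T x))"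

definition op_le :: "('a::real_inner \<Rightarrow> 'a) \<Rightarrow> ('a \<Rightarrow> 'a) \<Rightarrow> bool" where
  "op_le S T \<longleftrightarrow> positive_op (\<lambda>x. T x - S x)"

definition orth_proj :: "('a::real_inner \<Rightarrow> 'a) \<Rightarrow> bool" where
  "orth_proj P \<longleftrightarrow> self_adjoint_op P \<and> P \<circ> P = P"

definition op_abs :: "('a::real_inner \<Rightarrow> 'a) \<Rightarrow> ('a \<Rightarrow> 'a)" where
  "op_abs T = (THE S. positive_op S \<and> S \<circ> S = op_adj T \<circ> T)"

text \<open>Localisation: P V is multiplication by the indicator of the (open) region V of the
  Cauchy surface C (here the topological space 'x).\<close>
definition localization :: "('x::topological_space set \<Rightarrow> 'a::real_inner \<Rightarrow> 'a) \<Rightarrow> bool" where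
  "localization P \<longleftrightarrow>
     (\<forall>V. open V \<longrightarrow> orth_proj (P V)) \<and>
     (\<forall>V W. open V \<longrightarrow> open W \<longrightarrow> P (V \<inter> W) = P V \<circ> P W) \<and>
     P UNIV = id \<and> P {} = (\<lambda>_. 0)"

end

theory Submission
  imports Defs "HOL-Computational_Algebra.Formal_Power_Series"
begin


definition cc :: "nat \<Rightarrow> real" where "cc k = (-1)^k * ((1/2) gchoose k)"

lemma gchoose_Suc_rec: "(a::real) gchoose (Suc k) = (a - of_nat k) * (a gchoose k) / of_nat (Suc k)"
  using gbinomial_mult_1[of a k] by (simp add: field_simps)

lemma cc_0[simp]: "cc 0 = 1" by (simp add: cc_def)

lemma cc_Suc: "cc (Suc k) = cc k * (real k - 1/2) / (real k + 1)"
  by (simp add: cc_def gchoose_Suc_rec field_simps)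

lemma cc_nonpos: "k \<ge> 1 \<Longrightarrow> cc k \<le> 0"
proof (induction k rule: dec_induct)
  case base then show ?case by (simp add: cc_Suc[of 0])
next
  case (step n)
  then show ?case by (simp add: cc_Suc divide_nonpos_pos mult_nonpos_nonneg)
qed

definition hh :: "nat \<Rightarrow> real" where "hh n = (-1)^n * ((-1/2) gchoose n)"

lemma hh_nonneg: "hh n \<ge> 0"
proof (induction n)
  case 0 then show ?case by (simp add: hh_def)
next
  case (Suc n)
  have "hh (Suc n) = hh n * (real n + 1/2) / (real n + 1)"
    by (simp add: hh_def gchoose_Suc_rec field_simps)
  then show ?case using Suc by simp
qed

lemma cc_partial: "(\<Sum>k\<le>n. cc k) = hh n"
proof (induction n)
  case 0 then show ?case by (simp add: hh_def)
next
  case (Suc n)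
  have e: "(1/2::real) gchoose Suc n = ((-1/2) gchoose n) + ((-1/2) gchoose Suc n)"
    using gbinomial_Suc_Suc[of "-1/2::real" n] by simp
  show ?case using Suc by (simp add: hh_def cc_def e algebra_simps)
qed

lemma cc_abs_partial: "(\<Sum>k<n. \<bar>cc k\<bar>) \<le> 2"
proof (cases n)
  case 0 then show ?thesis by simp
next
  case (Suc m)
  have "(\<Sum>k<n. \<bar>cc k\<bar> + cc k) = 2"
  proof -
    have "(\<Sum>k<n. \<bar>cc k\<bar> + cc k) = (\<Sum>k<n. if k = 0 then 2 else 0)"
    proof (rule sum.cong)
      fix k assume "k \<in> {..<n}"
      show "\<bar>cc k\<bar> + cc k = (if k = 0 then 2 else 0)"
        using cc_nonpos[of k] by auto
    qed simp
    also have "\<dots> = 2" using Suc by simp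
    finally show ?thesis .
  qed
  moreover have "(\<Sum>k<n. cc k) \<ge> 0"
    using cc_partial[of m] hh_nonneg[of m] Suc by (simp add: lessThan_Suc_atMost)
  ultimately show ?thesis by (simp add: sum.distrib)
qed

lemma cc_abs_summable: "summable (\<lambda>k. \<bar>cc k\<bar>)"
  by (rule summableI_nonneg_bounded[where x=2]) (auto intro: cc_abs_partial)

lemma cc_summable: "summable cc"
  using cc_abs_summable summable_rabs_cancel by blast

lemma cc_suminf_nonneg: "suminf cc \<ge> 0"
proof -
  have "(\<lambda>n. \<Sum>k\<le>n. cc k) \<longlonglongrightarrow> suminf cc" by (rule summable_LIMSEQ'[OF cc_summable])
  then show ?thesis
    by (rule LIMSEQ_le_const) (auto simp: cc_partial hh_nonneg)
qed

lemma cc_conv: "(\<Sum>i\<le>n. cc i * cc (n - i)) = (if n = 0 then 1 else if n = 1 then -1 else 0)"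
proof -
  have "(\<Sum>i\<le>n. cc i * cc (n - i)) = (\<Sum>i=0..n. (-1)^n * (((1/2) gchoose i) * ((1/2) gchoose (n - i))))"
    unfolding atMost_atLeast0
  proof (rule sum.cong)
    fix i assume "i \<in> {0..n}"
    then have "(-1::real)^i * (-1)^(n-i) = (-1)^n"
      by (metis atLeastAtMost_iff le_add_diff_inverse power_add)
    then show "cc i * cc (n - i) = (-1)^n * (((1/2) gchoose i) * ((1/2) gchoose (n - i)))"
      unfolding cc_def by (metis (no_types, lifting) mult.assoc mult.left_commute)
  qed simp
  also have "\<dots> = (-1)^n * ((1::real) gchoose n)"
    by (simp add: sum_distrib_left[symmetric] gbinomial_Vandermonde)
  also have "\<dots> = (if n = 0 then 1 else if n = 1 then -1 else 0)"
  proof -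
    have "(1::real) gchoose n = real (1 choose n)"
      using binomial_gbinomial[of 1 n, where 'a=real] by simp
    then show ?thesis by (cases n) (auto simp: binomial_eq_0)
  qed
  finally show ?thesis .
qed




lemma diag_sums:
  fixes g :: "nat \<Rightarrow> nat \<Rightarrow> 'a::real_normed_vector" and a b :: "nat \<Rightarrow> real"
  assumes a: "summable a" and b: "summable b"
    and a0: "\<And>i. 0 \<le> a i" and b0: "\<And>j. 0 \<le> b j"
    and gb: "\<And>i j. norm (g i j) \<le> a i * b j"
    and L: "(\<lambda>n. \<Sum>i<n. \<Sum>j<n. g i j) \<longlonglongrightarrow> L"
  shows "(\<lambda>k. \<Sum>i\<le>k. g i (k - i)) sums L"
proof -
  let ?S1 = "\<lambda>n::nat. {..<n} \<times> {..<n}"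
  let ?S2 = "\<lambda>n::nat. {(i,j). i + j < n}"
  have S1_mono: "\<And>m n. m \<le> n \<Longrightarrow> ?S1 m \<subseteq> ?S1 n" by auto
  have S2_le_S1: "\<And>n. ?S2 n \<subseteq> ?S1 n" by auto
  have S1_le_S2: "\<And>n. ?S1 (n div 2) \<subseteq> ?S2 n" by auto
  have finite_S1: "\<And>n. finite (?S1 n)" by simp
  with S2_le_S1 have finite_S2: "\<And>n. finite (?S2 n)" by (rule finite_subset)
  let ?g = "\<lambda>(i,j). g i j"
  let ?f = "\<lambda>(i,j). a i * b j"
  have f_nonneg: "\<And>x. 0 \<le> ?f x" using a0 b0 by auto
  then have norm_sum_f: "\<And>A. norm (sum ?f A) = sum ?f A"
    unfolding real_norm_def
    by (simp only: abs_of_nonneg sum_nonneg [rule_format])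
  have 1: "(\<lambda>n. sum ?g (?S1 n)) \<longlonglongrightarrow> L"
    using L by (simp add: sum.cartesian_product)
  have "(\<lambda>n. (\<Sum>k<n. a k) * (\<Sum>k<n. b k)) \<longlonglongrightarrow> (\<Sum>k. a k) * (\<Sum>k. b k)"
    using a b by (intro tendsto_mult summable_LIMSEQ)
  then have "(\<lambda>n. sum ?f (?S1 n)) \<longlonglongrightarrow> (\<Sum>k. a k) * (\<Sum>k. b k)"
    by (simp only: sum_product sum.Sigma [rule_format] finite_lessThan)
  then have "convergent (\<lambda>n. sum ?f (?S1 n))"
    by (rule convergentI)
  then have Cauchy: "Cauchy (\<lambda>n. sum ?f (?S1 n))"
    by (rule convergent_Cauchy)
  have "Zfun (\<lambda>n. sum ?f (?S1 n - ?S2 n)) sequentially"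
  proof (rule ZfunI, simp only: eventually_sequentially norm_sum_f)
    fix r :: real
    assume r: "0 < r"
    from CauchyD [OF Cauchy r] obtain N
      where "\<forall>m\<ge>N. \<forall>n\<ge>N. norm (sum ?f (?S1 m) - sum ?f (?S1 n)) < r" ..
    then have "\<And>m n. N \<le> n \<Longrightarrow> n \<le> m \<Longrightarrow> norm (sum ?f (?S1 m - ?S1 n)) < r"
      by (simp only: sum_diff finite_S1 S1_mono)
    then have N: "\<And>m n. N \<le> n \<Longrightarrow> n \<le> m \<Longrightarrow> sum ?f (?S1 m - ?S1 n) < r"
      by (simp only: norm_sum_f)
    show "\<exists>N. \<forall>n\<ge>N. sum ?f (?S1 n - ?S2 n) < r"
    proof (intro exI allI impI)
      fix n
      assume "2 * N \<le> n"
      then have n: "N \<le> n div 2" by simp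
      have "sum ?f (?S1 n - ?S2 n) \<le> sum ?f (?S1 n - ?S1 (n div 2))"
        by (intro sum_mono2 finite_Diff finite_S1 f_nonneg Diff_mono subset_refl S1_le_S2)
      also have "\<dots> < r"
        using n div_le_dividend by (rule N)
      finally show "sum ?f (?S1 n - ?S2 n) < r" .
    qed
  qed
  then have "Zfun (\<lambda>n. sum ?g (?S1 n - ?S2 n)) sequentially"
    apply (rule Zfun_le [rule_format])
    apply (simp only: norm_sum_f)
    apply (rule order_trans [OF norm_sum sum_mono])
    apply (auto simp add: gb)
    done
  then have 2: "(\<lambda>n. sum ?g (?S1 n) - sum ?g (?S2 n)) \<longlonglongrightarrow> 0"
    unfolding tendsto_Zfun_iff diff_0_right
    by (simp only: sum_diff finite_S1 S2_le_S1)
  with 1 have "(\<lambda>n. sum ?g (?S2 n)) \<longlonglongrightarrow> L"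
    by (rule Lim_transform2)
  then show ?thesis
    by (simp only: sums_def sum.triangle_reindex)
qed

lemma summable_norm_cancel':
  fixes f :: "nat \<Rightarrow> 'a::{real_normed_vector,complete_space}"
  assumes s: "summable (\<lambda>n. norm (f n))"
  shows "summable f"
proof -
  let ?S = "\<lambda>n. \<Sum>i<n. f i"
  let ?T = "\<lambda>n. \<Sum>i<n. norm (f i)"
  have CT: "Cauchy ?T" using summable_LIMSEQ[OF s] by (rule LIMSEQ_imp_Cauchy)
  have key: "norm (?S m - ?S n) \<le> ?T m - ?T n" if "n \<le> m" for m n
  proof -
    have "?S m - ?S n = sum f {n..<m}"
      using sum_diff_nat_ivl[of 0 n m f] that by (simp add: atLeast0LessThan)
    moreover have "?T m - ?T n = (\<Sum>i\<in>{n..<m}. norm (f i))"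
      using sum_diff_nat_ivl[of 0 n m "\<lambda>i. norm (f i)"] that by (simp add: atLeast0LessThan)
    ultimately show ?thesis by (simp add: norm_sum)
  qed
  have "Cauchy ?S"
  proof (rule metric_CauchyI)
    fix e :: real assume "0 < e"
    with CT obtain M where M: "\<forall>m\<ge>M. \<forall>n\<ge>M. dist (?T m) (?T n) < e"
      unfolding Cauchy_def by blast
    show "\<exists>M. \<forall>m\<ge>M. \<forall>n\<ge>M. dist (?S m) (?S n) < e"
    proof (intro exI allI impI)
      fix m n assume mn: "M \<le> m" "M \<le> n"
      show "dist (?S m) (?S n) < e"
      proof (cases "n \<le> m")
        case True
        then have "dist (?S m) (?S n) \<le> ?T m - ?T n" using key[OF True] by (simp add: dist_norm)
        also have "\<dots> \<le> dist (?T m) (?T n)" by (simp add: dist_real_def)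
        finally show ?thesis using M mn by force
      next
        case False
        then have "dist (?S m) (?S n) \<le> ?T n - ?T m" using key[of m n]
          by (simp add: dist_norm norm_minus_commute)
        also have "\<dots> \<le> dist (?T m) (?T n)" by (simp add: dist_real_def)
        finally show ?thesis using M mn by force
      qed
    qed
  qed
  then show ?thesis unfolding summable_iff_convergent by (rule Cauchy_convergent)
qed

lemma summable_norm':
  fixes f :: "nat \<Rightarrow> 'a::{real_normed_vector,complete_space}"
  assumes s: "summable (\<lambda>n. norm (f n))"
  shows "norm (suminf f) \<le> (\<Sum>n. norm (f n))"
proof -
  have "(\<lambda>n. norm (\<Sum>i<n. f i)) \<longlonglongrightarrow> norm (suminf f)"
    by (intro tendsto_norm summable_LIMSEQ summable_norm_cancel'[OF s])
  moreover have "(\<lambda>n. \<Sum>i<n. norm (f i)) \<longlonglongrightarrow> (\<Sum>n. norm (f n))"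
    using s by (rule summable_LIMSEQ)
  ultimately show ?thesis
    by (rule LIMSEQ_le) (auto intro: norm_sum)
qed

lemma summable_comparison':
  fixes f :: "nat \<Rightarrow> 'a::{real_normed_vector,complete_space}"
  assumes "summable g" "\<And>n. norm (f n) \<le> g n"
  shows "summable (\<lambda>n. norm (f n))" "summable f"
proof -
  show "summable (\<lambda>n. norm (f n))"
    by (rule summable_comparison_test'[OF assms(1)]) (simp add: assms(2))
  then show "summable f" by (rule summable_norm_cancel')
qed

definition sq_ser :: "('a::real_normed_vector \<Rightarrow> 'a) \<Rightarrow> 'a \<Rightarrow> 'a" where
  "sq_ser N x = (\<Sum>k. cc k *\<^sub>R (N ^^ k) x)"

definition KK :: real where "KK = (\<Sum>k. \<bar>cc k\<bar>)"

lemma KK_nonneg: "0 \<le> KK"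
  unfolding KK_def by (rule suminf_nonneg[OF cc_abs_summable]) simp

lemma bl_add: "bounded_linear f \<Longrightarrow> f (x + y) = f x + f y"
  by (rule linear_add[OF bounded_linear.linear])
lemma bl_diff: "bounded_linear f \<Longrightarrow> f (x - y) = f x - f y"
  by (rule linear_diff[OF bounded_linear.linear])
lemma bl_scaleR: "bounded_linear f \<Longrightarrow> f (r *\<^sub>R x) = r *\<^sub>R f x"
  by (rule linear_scale[OF bounded_linear.linear])
lemma bl_zero: "bounded_linear f \<Longrightarrow> f 0 = 0"
  by (rule linear_0[OF bounded_linear.linear])
lemma bl_sum: "bounded_linear f \<Longrightarrow> f (sum g A) = (\<Sum>a\<in>A. f (g a))"
  by (rule linear_sum[OF bounded_linear.linear])

locale contr =
  fixes N :: "'a::{real_inner,complete_space} \<Rightarrow> 'a"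
  assumes bl: "bounded_linear N" and nc: "\<And>y. norm (N y) \<le> norm y"
begin

lemma pow_bl: "bounded_linear (N ^^ k)"
proof (induction k)
  case 0 then show ?case by (simp add: bounded_linear_ident[unfolded id_def] id_def)
next
  case (Suc k)
  then show ?case using bounded_linear_compose[OF bl Suc] by (simp add: o_def)
qed

lemma pow_nc: "norm ((N ^^ k) y) \<le> norm y"
proof (induction k)
  case 0 then show ?case by simp
next
  case (Suc k) then show ?case using nc[of "(N ^^ k) y"] by simp
qed

lemma ser_norm_summable: "summable (\<lambda>k. norm (cc k *\<^sub>R (N ^^ k) x))"
proof (rule summable_comparison'(1))
  show "summable (\<lambda>k. \<bar>cc k\<bar> * norm x)" using cc_abs_summable by (rule summable_mult2)
  fix k show "norm (cc k *\<^sub>R (N ^^ k) x) \<le> \<bar>cc k\<bar> * norm x"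
    using pow_nc[of k x] by (simp add: mult_left_mono)
qed

lemma ser_summable: "summable (\<lambda>k. cc k *\<^sub>R (N ^^ k) x)"
  using ser_norm_summable by (rule summable_norm_cancel')

lemma sq_norm: "norm (sq_ser N x) \<le> KK * norm x"
proof -
  have "norm (sq_ser N x) \<le> (\<Sum>k. norm (cc k *\<^sub>R (N ^^ k) x))"
    unfolding sq_ser_def using ser_norm_summable by (rule summable_norm')
  also have "\<dots> \<le> (\<Sum>k. \<bar>cc k\<bar> * norm x)"
  proof (rule suminf_le)
    fix k show "norm (cc k *\<^sub>R (N ^^ k) x) \<le> \<bar>cc k\<bar> * norm x"
      using pow_nc[of k x] by (simp add: mult_left_mono)
    show "summable (\<lambda>k. norm (cc k *\<^sub>R (N ^^ k) x))" by (rule ser_norm_summable)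
    show "summable (\<lambda>k. \<bar>cc k\<bar> * norm x)" using cc_abs_summable by (rule summable_mult2)
  qed
  also have "\<dots> = KK * norm x" unfolding KK_def by (rule suminf_mult2[symmetric, OF cc_abs_summable])
  finally show ?thesis .
qed

lemma sq_add: "sq_ser N (x + y) = sq_ser N x + sq_ser N y"
  unfolding sq_ser_def
  by (simp add: suminf_add[OF ser_summable ser_summable] bl_add[OF pow_bl] scaleR_add_right)

lemma sq_scale: "sq_ser N (r *\<^sub>R x) = r *\<^sub>R sq_ser N x"
proof -
  have "r *\<^sub>R sq_ser N x = (\<Sum>k. r *\<^sub>R (cc k *\<^sub>R (N ^^ k) x))"
    unfolding sq_ser_def by (rule bounded_linear.suminf[OF bounded_linear_scaleR_right ser_summable])
  then show ?thesis unfolding sq_ser_def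
    by (simp add: bl_scaleR[OF pow_bl] mult.commute)
qed

lemma sq_bl: "bounded_linear (sq_ser N)"
  by (rule bounded_linear_intro[where K=KK]) (auto simp: sq_add sq_scale sq_norm mult.commute)

lemma sq_commute:
  assumes T: "bounded_linear T" and TN: "\<And>x. T (N x) = N (T x)"
  shows "T (sq_ser N x) = sq_ser N (T x)"
proof -
  have p: "T ((N ^^ k) y) = (N ^^ k) (T y)" for k y
    by (induction k) (auto simp: TN)
  show ?thesis unfolding sq_ser_def
    by (simp add: bounded_linear.suminf[OF T ser_summable] bl_scaleR[OF T] p)
qed

end

locale contr_sa = contr +
  assumes sa: "\<And>x y. inner (N x) y = inner x (N y)"
begin

lemma pow_sa: "inner ((N ^^ k) x) y = inner x ((N ^^ k) y)"
proof (induction k arbitrary: y)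
  case 0 then show ?case by simp
next
  case (Suc k)
  have "inner ((N ^^ Suc k) x) y = inner ((N ^^ k) x) (N y)" by (simp add: sa)
  also have "\<dots> = inner x ((N ^^ k) (N y))" by (rule Suc)
  also have "\<dots> = inner x ((N ^^ Suc k) y)" by (simp add: funpow_swap1)
  finally show ?case .
qed

lemma sq_sa: "inner (sq_ser N x) y = inner x (sq_ser N y)"
proof -
  have "inner (sq_ser N x) y = (\<Sum>k. inner (cc k *\<^sub>R (N ^^ k) x) y)"
    unfolding sq_ser_def by (rule bounded_linear.suminf[OF bounded_linear_inner_left ser_summable])
  also have "\<dots> = (\<Sum>k. inner x (cc k *\<^sub>R (N ^^ k) y))"
    by (simp add: pow_sa)
  also have "\<dots> = inner x (sq_ser N y)"
    unfolding sq_ser_def by (rule bounded_linear.suminf[OF bounded_linear_inner_right ser_summable, symmetric])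
  finally show ?thesis .
qed

lemma sq_pos: "0 \<le> inner x (sq_ser N x)"
proof -
  have e: "inner x (sq_ser N x) = (\<Sum>k. inner x (cc k *\<^sub>R (N ^^ k) x))"
    unfolding sq_ser_def by (rule bounded_linear.suminf[OF bounded_linear_inner_right ser_summable])
  have s: "summable (\<lambda>k. inner x (cc k *\<^sub>R (N ^^ k) x))"
    by (rule bounded_linear.summable[OF bounded_linear_inner_right ser_summable])
  have "(\<Sum>k. cc k * (norm x)^2) \<le> (\<Sum>k. inner x (cc k *\<^sub>R (N ^^ k) x))"
  proof (rule suminf_le)
    fix k
    show "cc k * (norm x)^2 \<le> inner x (cc k *\<^sub>R (N ^^ k) x)"
    proof (cases "k = 0")
      case True then show ?thesis by (simp add: power2_norm_eq_inner)
    next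
      case False
      have "inner x ((N ^^ k) x) \<le> norm x * norm ((N ^^ k) x)" by (rule norm_cauchy_schwarz)
      also have "\<dots> \<le> norm x * norm x" by (rule mult_left_mono[OF pow_nc]) simp
      finally have "inner x ((N ^^ k) x) \<le> (norm x)^2" by (simp add: power2_eq_square)
      moreover have "cc k \<le> 0" using False cc_nonpos by simp
      ultimately show ?thesis by (simp add: mult_left_mono_neg)
    qed
    show "summable (\<lambda>k. cc k * (norm x)^2)" using cc_summable by (rule summable_mult2)
    show "summable (\<lambda>k. inner x (cc k *\<^sub>R (N ^^ k) x))" by (rule s)
  qed
  moreover have "(\<Sum>k. cc k * (norm x)^2) = suminf cc * (norm x)^2"
    by (rule suminf_mult2[symmetric, OF cc_summable])
  moreover have "0 \<le> suminf cc * (norm x)^2" using cc_suminf_nonneg by simp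
  ultimately show ?thesis using e by linarith
qed

definition Tn :: "nat \<Rightarrow> 'a \<Rightarrow> 'a" where "Tn n y = (\<Sum>j<n. cc j *\<^sub>R (N ^^ j) y)"

lemma Tn_lim: "(\<lambda>n. Tn n y) \<longlonglongrightarrow> sq_ser N y"
  unfolding Tn_def sq_ser_def by (rule summable_LIMSEQ[OF ser_summable])

lemma Tn_diff: "Tn n (a - b) = Tn n a - Tn n b"
  unfolding Tn_def by (simp add: bl_diff[OF pow_bl] scaleR_diff_right sum_subtractf)

lemma Tn_norm: "norm (Tn n y) \<le> KK * norm y"
proof -
  have "norm (Tn n y) \<le> (\<Sum>j<n. norm (cc j *\<^sub>R (N ^^ j) y))" unfolding Tn_def by (rule norm_sum)
  also have "\<dots> \<le> (\<Sum>j<n. \<bar>cc j\<bar> * norm y)"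
    by (rule sum_mono) (simp add: pow_nc mult_left_mono)
  also have "\<dots> = (\<Sum>j<n. \<bar>cc j\<bar>) * norm y" by (simp add: sum_distrib_right)
  also have "\<dots> \<le> KK * norm y" unfolding KK_def
    by (rule mult_right_mono[OF sum_le_suminf[OF cc_abs_summable]]) auto
  finally show ?thesis .
qed

lemma sq_sq: "sq_ser N (sq_ser N x) = x - N x"
proof -
  define g where "g i j = (cc i * cc j) *\<^sub>R (N ^^ (i + j)) x" for i j
  let ?S = "sq_ser N"
  have a: "(\<Sum>i<n. \<Sum>j<n. g i j) = Tn n (Tn n x)" for n
    unfolding Tn_def g_def
    by (simp add: bl_sum[OF pow_bl] bl_scaleR[OF pow_bl] scaleR_sum_right funpow_add)
  have z: "(\<lambda>n. Tn n (Tn n x) - Tn n (?S x)) \<longlonglongrightarrow> 0"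
  proof (rule tendsto_0_le[where K=KK])
    show "(\<lambda>n. Tn n x - ?S x) \<longlonglongrightarrow> 0" using Tn_lim by (rule LIM_zero)
    show "\<forall>\<^sub>F n in sequentially. norm (Tn n (Tn n x) - Tn n (?S x)) \<le> norm (Tn n x - ?S x) * KK"
      by (auto simp: Tn_diff[symmetric] Tn_norm mult.commute)
  qed
  have "(\<lambda>n. (Tn n (Tn n x) - Tn n (?S x)) + Tn n (?S x)) \<longlonglongrightarrow> 0 + ?S (?S x)"
    by (rule tendsto_add[OF z Tn_lim])
  then have L: "(\<lambda>n. \<Sum>i<n. \<Sum>j<n. g i j) \<longlonglongrightarrow> ?S (?S x)" by (simp add: a)
  have d: "(\<lambda>k. \<Sum>i\<le>k. g i (k - i)) sums ?S (?S x)"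
  proof (rule diag_sums[where a="\<lambda>i. \<bar>cc i\<bar> * norm x" and b="\<lambda>j. \<bar>cc j\<bar>"])
    show "summable (\<lambda>i. \<bar>cc i\<bar> * norm x)" using cc_abs_summable by (rule summable_mult2)
    show "summable (\<lambda>j. \<bar>cc j\<bar>)" by (rule cc_abs_summable)
    show "norm (g i j) \<le> \<bar>cc i\<bar> * norm x * \<bar>cc j\<bar>" for i j
    proof -
      have "norm (g i j) = \<bar>cc i\<bar> * \<bar>cc j\<bar> * norm ((N ^^ (i + j)) x)"
        by (simp add: g_def abs_mult)
      also have "\<dots> \<le> \<bar>cc i\<bar> * \<bar>cc j\<bar> * norm x"
        by (rule mult_left_mono[OF pow_nc]) simp
      finally show ?thesis by (simp add: mult_ac)
    qed
  qed (auto intro: L)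
  have e: "(\<Sum>i\<le>k. g i (k - i)) = (if k = 0 then 1 else if k = 1 then -1 else 0) *\<^sub>R (N ^^ k) x" for k
  proof -
    have "(\<Sum>i\<le>k. g i (k - i)) = (\<Sum>i\<le>k. (cc i * cc (k - i)) *\<^sub>R (N ^^ k) x)"
      by (rule sum.cong) (auto simp: g_def)
    also have "\<dots> = (\<Sum>i\<le>k. cc i * cc (k - i)) *\<^sub>R (N ^^ k) x" by (simp add: scaleR_sum_left)
    finally show ?thesis by (simp add: cc_conv)
  qed
  have f: "(\<lambda>k. (if k = 0 then 1 else if k = 1 then -1 else 0) *\<^sub>R (N ^^ k) x) sums
      (\<Sum>k\<in>{0,1}. (if k = 0 then 1 else if k = 1 then -1 else 0) *\<^sub>R (N ^^ k) x)"
    by (rule sums_finite) auto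
  have "(\<Sum>k\<in>{0::nat,1}. (if k = 0 then 1 else if k = 1 then -1 else 0) *\<^sub>R (N ^^ k) x) = x - N x"
    by simp
  with f d e show ?thesis using sums_unique2 by fastforce
qed

end




lemma sa_inner_sym: "self_adjoint_op A \<Longrightarrow> inner (A x) y = inner x (A y)"
  unfolding self_adjoint_op_def by blast

lemma pos_zero:
  assumes A: "positive_op A" and y: "inner y (A y) = 0"
  shows "A y = 0"
proof -
  have bl: "bounded_linear A" and sym: "\<And>x y. inner (A x) y = inner x (A y)"
    and pos: "\<And>x. 0 \<le> inner x (A x)"
    using A unfolding positive_op_def self_adjoint_op_def by blast+
  define z where "z = A y"
  define a where "a = inner z (A y)"
  define b where "b = inner z (A z)"
  have a0: "a = (norm (A y))^2" by (simp add: a_def z_def power2_norm_eq_inner)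
  have b0: "0 \<le> b" using pos by (simp add: b_def)
  have yz: "inner y (A z) = a"
  proof -
    have "inner y (A z) = inner (A y) z" by (rule sym[symmetric])
    also have "\<dots> = a" by (simp only: a_def inner_commute)
    finally show ?thesis .
  qed
  have q: "0 \<le> 2 * t * a + t^2 * b" for t
  proof -
    have e1: "A (y + t *\<^sub>R z) = A y + t *\<^sub>R A z" by (simp add: bl_add[OF bl] bl_scaleR[OF bl])
    have "0 \<le> inner (y + t *\<^sub>R z) (A (y + t *\<^sub>R z))" by (rule pos)
    also have "\<dots> = inner y (A y) + t * inner y (A z) + (t * inner z (A y) + t * (t * inner z (A z)))"
      unfolding e1 by (simp add: inner_add_left inner_add_right distrib_left)
    also have "\<dots> = 2 * t * a + t^2 * b"
      using y yz by (simp add: a_def b_def power2_eq_square)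
    finally show ?thesis .
  qed
  define t where "t = - a / (b + 1)"
  have tb: "t * (b + 1) = - a" using b0 by (simp add: t_def)
  have "(2 * t * a + t^2 * b) * (b+1)^2 = 2 * a * (t * (b+1)) * (b+1) + (t * (b+1))^2 * b"
    by (simp add: power2_eq_square algebra_simps)
  also have "\<dots> = - (a^2 * (b + 2))" unfolding tb by (simp add: power2_eq_square algebra_simps)
  finally have "0 \<le> - (a^2 * (b + 2))" using q[of t] by (metis zero_le_power2 mult_nonneg_nonneg)
  then have "a^2 * (b + 2) \<le> 0" by simp
  moreover have "0 < b + 2" using b0 by simp
  ultimately have "a^2 \<le> 0" by (simp add: mult_le_0_iff)
  then have "a = 0" by simp
  then have "norm (A y) = 0" using a0 by simp
  then show ?thesis by simp
qed

lemma sqrt_unique: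
  assumes S: "positive_op S" and T: "positive_op T"
    and sq: "\<And>x. S (S x) = T (T x)" and cm: "\<And>x. S (T x) = T (S x)"
  shows "S = T"
proof -
  have Sbl: "bounded_linear S" and Ssym: "\<And>x y. inner (S x) y = inner x (S y)"
    and Spos: "\<And>x. 0 \<le> inner x (S x)"
    using S unfolding positive_op_def self_adjoint_op_def by blast+
  have Tbl: "bounded_linear T" and Tsym: "\<And>x y. inner (T x) y = inner x (T y)"
    and Tpos: "\<And>x. 0 \<le> inner x (T x)"
    using T unfolding positive_op_def self_adjoint_op_def by blast+
  define D where "D x = S x - T x" for x
  have Dsym: "inner (D x) y = inner x (D y)" for x y
    by (simp add: D_def inner_diff_left inner_diff_right Ssym Tsym)
  have sum0: "S (D x) + T (D x) = 0" for x
    by (simp add: D_def bl_diff[OF Sbl] bl_diff[OF Tbl] sq cm)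
  have both: "inner (D x) (S (D x)) = 0 \<and> inner (D x) (T (D x)) = 0" for x
  proof -
    have "inner (D x) (S (D x)) + inner (D x) (T (D x)) = 0"
      using sum0[of x] by (simp add: inner_add_right[symmetric])
    then show ?thesis using Spos[of "D x"] Tpos[of "D x"] by linarith
  qed
  have SD: "S (D x) = 0" for x using both[of x] pos_zero S by blast
  have TD: "T (D x) = 0" for x using both[of x] pos_zero T by blast
  have DD: "D (D x) = 0" for x
    by (simp only: D_def[of "D x"] SD TD diff_self)
  have "D x = 0" for x
  proof -
    have "inner (D x) (D x) = inner x (D (D x))" by (rule Dsym)
    also have "\<dots> = 0" by (simp only: DD inner_zero_right)
    finally show ?thesis by simp
  qed
  then show ?thesis by (auto simp: D_def fun_eq_iff)
qed

lemma sqrt_exists: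
  fixes M :: "'a::{real_inner,complete_space} \<Rightarrow> 'a"
  assumes bl: "bounded_linear M" and sym: "\<And>x y. inner (M x) y = inner x (M y)"
    and nc: "\<And>x. norm (x - M x) \<le> norm x"
  shows "\<exists>S. positive_op S \<and> (\<forall>x. S (S x) = M x) \<and>
     (\<forall>T. bounded_linear T \<longrightarrow> (\<forall>x. T (M x) = M (T x)) \<longrightarrow> (\<forall>x. T (S x) = S (T x)))"
proof -
  let ?N = "\<lambda>x. x - M x"
  have c: "contr ?N"
  proof (rule contr.intro)
    show "bounded_linear ?N" by (intro bounded_linear_sub bounded_linear_ident bl)
    show "norm (?N y) \<le> norm y" for y by (rule nc)
  qed
  have ca: "contr_sa_axioms ?N"
  proof (rule contr_sa_axioms.intro)
    show "inner (?N x) y = inner x (?N y)" for x y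
      by (simp add: inner_diff_left inner_diff_right sym)
  qed
  interpret contr_sa ?N by (rule contr_sa.intro[OF c ca])
  show ?thesis
  proof (intro exI conjI allI impI)
    show "positive_op (sq_ser ?N)"
      unfolding positive_op_def self_adjoint_op_def using sq_bl sq_sa sq_pos by blast
    show "sq_ser ?N (sq_ser ?N x) = M x" for x by (simp add: sq_sq)
    fix T x assume T: "bounded_linear T" and TM: "\<forall>x. T (M x) = M (T x)"
    show "T (sq_ser ?N x) = sq_ser ?N (T x)"
      by (rule sq_commute[OF T]) (simp add: bl_diff[OF T] TM)
  qed
qed

lemma op_adj_eq:
  assumes "\<And>x y. inner (X x) y = inner x (Y y)"
  shows "op_adj X = Y"
  unfolding op_adj_def
proof (rule the_equality)
  show "\<forall>x y. inner (X x) y = inner x (Y y)" using assms by blast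
  fix Z assume Z: "\<forall>x y. inner (X x) y = inner x (Z y)"
  show "Z = Y"
  proof
    fix y
    have "inner (Z y - Y y) (Z y - Y y) = 0"
      using Z assms by (simp add: inner_diff_left inner_diff_right inner_commute)
    then show "Z y = Y y" by simp
  qed
qed

lemma op_abs_exists:
  fixes X :: "'a::{real_inner,complete_space} \<Rightarrow> 'a"
  assumes Xbl: "bounded_linear X" and Ybl: "bounded_linear Y"
    and adj: "\<And>x y. inner (X x) y = inner x (Y y)"
    and nc: "\<And>x. norm (x - Y (X x)) \<le> norm x"
  shows "positive_op (op_abs X) \<and> (\<forall>x. op_abs X (op_abs X x) = Y (X x)) \<and>
     (\<forall>T. bounded_linear T \<longrightarrow> (\<forall>x. T (Y (X x)) = Y (X (T x))) \<longrightarrow>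
        (\<forall>x. T (op_abs X x) = op_abs X (T x)))"
proof -
  have bl: "bounded_linear (\<lambda>x. Y (X x))"
    using bounded_linear_compose[OF Ybl Xbl] by (simp add: o_def)
  have sym: "inner (Y (X x)) y = inner x (Y (X y))" for x y
  proof -
    have "inner (Y (X x)) y = inner y (Y (X x))" by (rule inner_commute)
    also have "\<dots> = inner (X y) (X x)" by (rule adj[symmetric])
    also have "\<dots> = inner (X x) (X y)" by (rule inner_commute)
    also have "\<dots> = inner x (Y (X y))" by (rule adj)
    finally show ?thesis .
  qed
  from sqrt_exists[OF bl sym nc] obtain S where S1: "positive_op S" and S2: "\<forall>x. S (S x) = Y (X x)"
    and Sc': "\<forall>T. bounded_linear T \<longrightarrow> (\<forall>x. T (Y (X x)) = Y (X (T x))) \<longrightarrow> (\<forall>x. T (S x) = S (T x))"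
    by (elim exE conjE)
  have S: "positive_op S" "\<And>x. S (S x) = Y (X x)" using S1 S2 by auto
  have Sc: "\<And>T. bounded_linear T \<Longrightarrow> (\<forall>x. T (Y (X x)) = Y (X (T x))) \<Longrightarrow> (\<forall>x. T (S x) = S (T x))"
    using Sc' by blast
  have adjX: "op_adj X = Y" by (rule op_adj_eq[OF adj])
  have "op_abs X = S"
    unfolding op_abs_def adjX
  proof (rule the_equality)
    show "positive_op S \<and> S \<circ> S = Y \<circ> X" using S by (auto simp: fun_eq_iff)
    fix S' assume S': "positive_op S' \<and> S' \<circ> S' = Y \<circ> X"
    then have S'1: "positive_op S'" and S'2: "\<And>x. S' (S' x) = Y (X x)" by (auto simp: fun_eq_iff)
    have "bounded_linear S'" using S'1 unfolding positive_op_def self_adjoint_op_def by blast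
    moreover have "\<forall>x. S' (Y (X x)) = Y (X (S' x))" by (simp add: S'2[symmetric])
    ultimately have cm: "\<And>x. S' (S x) = S (S' x)" using Sc by blast
    show "S' = S"
      by (rule sqrt_unique[OF S'1 S(1)]) (simp_all add: S'2 S(2) cm)
  qed
  then show ?thesis using S Sc by simp
qed




lemma proj_nc:
  assumes "orth_proj Q" shows "norm (Q x) \<le> norm x"
proof -
  have sym: "\<And>x y. inner (Q x) y = inner x (Q y)" and idem: "\<And>x. Q (Q x) = Q x"
    using assms unfolding orth_proj_def self_adjoint_op_def by (auto simp: fun_eq_iff dest: fun_cong)
  have "(norm (Q x))^2 = inner (Q x) (Q x)" by (simp add: power2_norm_eq_inner)
  also have "\<dots> = inner x (Q (Q x))" by (rule sym)
  also have "\<dots> = inner x (Q x)" by (simp add: idem)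
  also have "\<dots> \<le> norm x * norm (Q x)" by (rule norm_cauchy_schwarz)
  finally have "norm (Q x) * norm (Q x) \<le> norm x * norm (Q x)" by (simp add: power2_eq_square)
  then show ?thesis
    by (cases "norm (Q x) = 0") (auto simp: mult_le_cancel_right)
qed

theorem mainTheorem3:
  fixes P :: "'x::topological_space set \<Rightarrow> 'a::{real_inner, complete_space} \<Rightarrow> 'a"
    and Sigma :: "'a \<Rightarrow> 'a"
    and A B B' :: "'x set"
  assumes loc: "localization P"
    and Sigma_sa: "self_adjoint_op Sigma"
    and Sigma_contr: "onorm Sigma \<le> 1"
    and A_open: "open A" and B_open: "open B" and AB_disj: "A \<inter> B = {}"
    and B'_def: "B' = UNIV - closure B"
    and PB_sum: "\<forall>x. P B x + P B' x = x"
  shows "op_le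
           (P A \<circ> (\<lambda>x. P B' x - (P B' \<circ> Sigma \<circ> P B' \<circ> P B' \<circ> Sigma \<circ> P B') x) \<circ> P A)
           ((\<lambda>x. P A x + op_abs (P B \<circ> Sigma \<circ> P A) x) \<circ>
            (\<lambda>x. P A x + op_abs (P B \<circ> Sigma \<circ> P A) x))"
proof -
  have pA: "orth_proj (P A)" and pB: "orth_proj (P B)"
    using loc A_open B_open unfolding localization_def by blast+
  have Abl: "bounded_linear (P A)" and Asym: "\<And>x y. inner (P A x) y = inner x (P A y)"
    and Aid: "\<And>x. P A (P A x) = P A x"
    using pA unfolding orth_proj_def self_adjoint_op_def by (auto simp: fun_eq_iff dest: fun_cong)
  have Bbl: "bounded_linear (P B)" and Bsym: "\<And>x y. inner (P B x) y = inner x (P B y)"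
    and Bid: "\<And>x. P B (P B x) = P B x"
    using pB unfolding orth_proj_def self_adjoint_op_def by (auto simp: fun_eq_iff dest: fun_cong)
  have Pe: "P {} = (\<lambda>_. 0)" using loc unfolding localization_def by blast
  have AB: "P A (P B x) = 0" for x
  proof -
    have "P (A \<inter> B) = P A \<circ> P B" using loc A_open B_open unfolding localization_def by blast
    then show ?thesis using AB_disj Pe by (metis comp_apply)
  qed
  have BA: "P B (P A x) = 0" for x
  proof -
    have "P (B \<inter> A) = P B \<circ> P A" using loc A_open B_open unfolding localization_def by blast
    then show ?thesis using AB_disj Pe by (metis comp_apply inf_commute)
  qed
  have B': "P B' x = x - P B x" for x using PB_sum by (metis add_diff_cancel_left')
  have Sbl: "bounded_linear Sigma" and Ssym: "\<And>x y. inner (Sigma x) y = inner x (Sigma y)"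
    using Sigma_sa unfolding self_adjoint_op_def by blast+
  have Snc: "norm (Sigma x) \<le> norm x" for x
  proof -
    have "norm (Sigma x) \<le> onorm Sigma * norm x" by (rule onorm[OF Sbl])
    also have "\<dots> \<le> 1 * norm x" by (rule mult_right_mono[OF Sigma_contr]) simp
    finally show ?thesis by simp
  qed
  let ?X = "P B \<circ> Sigma \<circ> P A"
  let ?Y = "P A \<circ> Sigma \<circ> P B"
  have Xbl: "bounded_linear ?X"
    using bounded_linear_compose[OF Bbl bounded_linear_compose[OF Sbl Abl]] by (simp add: o_def)
  have Ybl: "bounded_linear ?Y"
    using bounded_linear_compose[OF Abl bounded_linear_compose[OF Sbl Bbl]] by (simp add: o_def)
  have adj: "inner (?X x) y = inner x (?Y y)" for x y
    by (simp add: Asym Bsym Ssym)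
  have Ync: "norm (?Y w) \<le> norm w" for w
    using proj_nc[OF pA, of "Sigma (P B w)"] Snc[of "P B w"] proj_nc[OF pB, of w] by simp
  have nc: "norm (x - ?Y (?X x)) \<le> norm x" for x
  proof -
    define w where "w = ?X x"
    have i: "inner x (?Y w) = (norm w)^2"
      using adj[of x w] by (simp add: w_def power2_norm_eq_inner)
    have "(norm (x - ?Y w))^2 = (norm x)^2 - 2 * inner x (?Y w) + (norm (?Y w))^2"
      by (simp add: power2_norm_eq_inner inner_diff_left inner_diff_right inner_commute)
    also have "\<dots> \<le> (norm x)^2 - 2 * (norm w)^2 + (norm w)^2"
      using i Ync[of w] by (simp add: power_mono)
    also have "\<dots> \<le> (norm x)^2" by simp
    finally have "(norm (x - ?Y w))^2 \<le> (norm x)^2" .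
    then show ?thesis unfolding w_def by (rule power2_le_imp_le) simp
  qed
  define S where "S = op_abs ?X"
  have Sprops: "positive_op S \<and> (\<forall>x. S (S x) = ?Y (?X x)) \<and>
     (\<forall>T. bounded_linear T \<longrightarrow> (\<forall>x. T (?Y (?X x)) = ?Y (?X (T x))) \<longrightarrow>
        (\<forall>x. T (S x) = S (T x)))"
    unfolding S_def by (rule op_abs_exists[OF Xbl Ybl adj nc])
  have SSbl: "bounded_linear S" and SSsym: "\<And>x y. inner (S x) y = inner x (S y)"
    and SSpos: "\<And>x. 0 \<le> inner x (S x)"
    using Sprops unfolding positive_op_def self_adjoint_op_def by blast+
  have SS: "S (S x) = P A (Sigma (P B (Sigma (P A x))))" for x
    using Sprops by (simp add: Bid)
  have SQ: "S (P A x) = S x" for x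
  proof -
    define d where "d = x - P A x"
    have "P A d = 0" by (simp add: d_def bl_diff[OF Abl] Aid)
    then have "S (S d) = 0" by (simp add: SS bl_zero[OF Sbl] bl_zero[OF Bbl] bl_zero[OF Abl])
    then have "inner (S d) (S d) = 0" by (simp add: SSsym)
    then have "S d = 0" by simp
    then show ?thesis by (simp add: d_def bl_diff[OF SSbl])
  qed
  have QS: "P A (S x) = S x" for x
  proof -
    have "\<forall>x. P A (?Y (?X x)) = ?Y (?X (P A x))" by (simp add: Aid)
    then have "P A (S x) = S (P A x)" using Sprops Abl by blast
    then show ?thesis by (simp add: SQ)
  qed
  define G where "G x = 2 *\<^sub>R S x + P A (Sigma (Sigma (P A x)))" for x
  have Feq: "(\<lambda>x. ((\<lambda>x. P A x + op_abs (P B \<circ> Sigma \<circ> P A) x) \<circ>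
            (\<lambda>x. P A x + op_abs (P B \<circ> Sigma \<circ> P A) x)) x -
       (P A \<circ> (\<lambda>x. P B' x - (P B' \<circ> Sigma \<circ> P B' \<circ> P B' \<circ> Sigma \<circ> P B') x) \<circ> P A) x) = G"
  proof
    fix x
    show "((\<lambda>x. P A x + op_abs (P B \<circ> Sigma \<circ> P A) x) \<circ>
            (\<lambda>x. P A x + op_abs (P B \<circ> Sigma \<circ> P A) x)) x -
       (P A \<circ> (\<lambda>x. P B' x - (P B' \<circ> Sigma \<circ> P B' \<circ> P B' \<circ> Sigma \<circ> P B') x) \<circ> P A) x = G x"
      unfolding S_def[symmetric] G_def
      by (simp add: B' bl_diff[OF Abl] bl_diff[OF Bbl] bl_diff[OF Sbl] bl_add[OF Abl] bl_add[OF SSbl]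
          Aid Bid AB BA SQ QS SS bl_zero[OF Sbl] bl_zero[OF Bbl] bl_add[OF Bbl] bl_add[OF Sbl] algebra_simps scaleR_2)
  qed
  have Gbl: "bounded_linear G"
  proof -
    have "bounded_linear (\<lambda>x. P A (Sigma (Sigma (P A x))))"
      using bounded_linear_compose[OF Abl bounded_linear_compose[OF Sbl bounded_linear_compose[OF Sbl Abl]]]
      by (simp add: o_def)
    moreover have "bounded_linear (\<lambda>x. 2 *\<^sub>R S x)"
      by (rule bounded_linear_compose[OF bounded_linear_scaleR_right SSbl])
    ultimately show ?thesis unfolding G_def[abs_def] by (rule bounded_linear_add[rotated])
  qed
  have Gsym: "inner (G x) y = inner x (G y)" for x y
    by (simp add: G_def inner_add_left inner_add_right SSsym Asym Ssym)
  have Gpos: "0 \<le> inner x (G x)" for x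
  proof -
    have "inner x (P A (Sigma (Sigma (P A x)))) = inner (Sigma (P A x)) (Sigma (P A x))"
      by (simp add: Asym[symmetric] Ssym[symmetric])
    then have "0 \<le> inner x (P A (Sigma (Sigma (P A x))))" by simp
    moreover have "0 \<le> inner x (S x)" by (rule SSpos)
    ultimately show ?thesis by (simp add: G_def inner_add_right)
  qed
  show ?thesis
    unfolding op_le_def Feq positive_op_def self_adjoint_op_def
    using Gbl Gsym Gpos by blast
qed


end
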